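(* Let $n \ge 3$, fix an integer $\beta > 2$, and let $S_{2,\beta}$ be the set of compositions $\alpha$ of length $n-1$ of the form $\alpha = (2, 1, \ldots, 1, \beta, 1, \ldots, 1)$, with first entry $2$, entry $\beta$ in position $k$ for some $k \in [2, n-1]$, and all other entries $1$. Then for every prime $p$, $$\sum_{\alpha \in S_{2, \beta}} g_\alpha(p) = \frac{p^{n- 3} \big((n - 2) p^{n - 1} - (n - 1) p^{n-2} + 1\big)}{(p - 1)^2}+ (p-1)p^{n-3} \binom{n-1}{2}.$$
   Context: For a composition $\alpha=(e_1,\ldots,e_{n-1})$ (positive integers), $g_\alpha(p)$ is the number of $n\times n$ irreducible subring matrices with diagonal $(p^{e_1},\ldots,p^{e_{n-1}},1)$: upper triangular integer matrices $A$ with $A_{rr}=p^{e_r}$ ($r<n$), $A_{nn}=1$, last column $(1,\ldots,1)^T$, entries $A_{rs}=p\,a_{rs}$ for $1\le r<s\le n-1$ with integers $0\le p\,a_{rs}<p^{e_r}$, such that for all columns $v_i,v_j$ of $A$ the componentwise product $v_i\circ v_j$ lies in the $\mathbb{Z}$-column span of $A$. *)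

theory Defs
  imports Complex_Main "HOL-Computational_Algebra.Primes"
begin

text \<open>A composition alpha = (e_1,...,e_{n-1}) is a list of positive naturals of length n-1.
  Matrices are functions nat => nat => int, indices 0..n-1 (row r, column s), with all
  entries outside this range equal to 0 (so that the set of matrices is finite).
  Index r (0-based) corresponds to index r+1 of the paper.\<close>

definition subring_matrices :: "nat \<Rightarrow> nat list \<Rightarrow> (nat \<Rightarrow> nat \<Rightarrow> int) set" where
  "subring_matrices p e =
    (let n = length e + 1 in
     {A. (\<forall>r s. (r \<ge> n \<or> s \<ge> n) \<longrightarrow> A r s = 0)
       \<and> (\<forall>r<n. \<forall>s<n. s < r \<longrightarrow> A r s = 0)
       \<and> (\<forall>r<n - 1. A r r = int p ^ (e ! r))
       \<and> (\<forall>r<n. A r (n - 1) = 1)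
       \<and> (\<forall>r s. r < s \<and> s < n - 1 \<longrightarrow>
             (\<exists>a::int. A r s = int p * a \<and> 0 \<le> int p * a \<and> int p * a < int p ^ (e ! r)))
       \<and> (\<forall>i<n. \<forall>j<n. \<exists>c::nat \<Rightarrow> int. \<forall>r<n.
             A r i * A r j = (\<Sum>k<n. c k * A r k))})"

definition g :: "nat list \<Rightarrow> nat \<Rightarrow> nat" where
  "g e p = card (subring_matrices p e)"

definition S2beta :: "nat \<Rightarrow> nat \<Rightarrow> nat list set" where
  "S2beta n \<beta> = {\<alpha>. length \<alpha> = n - 1 \<and>
      (\<exists>k\<in>{2..n-1}. \<forall>i<n - 1. \<alpha> ! i = (if i = 0 then 2 else if i = k - 1 then \<beta> else 1))}"

end

theory Submission
  imports Defs "HOL-Library.FuncSet"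
begin

definition CondG :: "int \<Rightarrow> nat \<Rightarrow> nat \<Rightarrow> nat \<Rightarrow> (nat \<Rightarrow> nat \<Rightarrow> int) \<Rightarrow> bool" where
  "CondG P n m \<beta> A \<longleftrightarrow> (\<forall>i j. m < i \<and> i < n-1 \<and> m < j \<and> j < n-1 \<longrightarrow>
   (\<exists>t. A m i * (A m j - (if i = j then P else 0)) = P^\<beta> * t \<and> P^2 dvd t * A 0 m))"


locale shp =
  fixes P :: int and n m \<beta> :: nat and A :: "nat \<Rightarrow> nat \<Rightarrow> int"
  assumes P2: "P \<ge> 2" and n3: "n \<ge> 3" and m1: "1 \<le> m" and mn: "m < n - 1" and b2: "\<beta> \<ge> 2"
  and out: "\<And>r s. r \<ge> n \<or> s \<ge> n \<Longrightarrow> A r s = 0"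
  and low: "\<And>r s. s < r \<Longrightarrow> A r s = 0"
  and lastc: "\<And>r. r < n \<Longrightarrow> A r (n-1) = 1"
  and d0: "A 0 0 = P^2" and dm: "A m m = P^\<beta>"
  and dr: "\<And>r. 0 < r \<Longrightarrow> r < n-1 \<Longrightarrow> r \<noteq> m \<Longrightarrow> A r r = P"
  and z: "\<And>r s. r < s \<Longrightarrow> s < n-1 \<Longrightarrow> r \<noteq> 0 \<Longrightarrow> r \<noteq> m \<Longrightarrow> A r s = 0"
  and row0: "\<And>s. 0 < s \<Longrightarrow> s < n-1 \<Longrightarrow> P dvd A 0 s"
  and rowm: "\<And>s. m < s \<Longrightarrow> s < n-1 \<Longrightarrow> P dvd A m s"
begin

definition inspan where "inspan v \<longleftrightarrow> (\<exists>c. \<forall>r<n. v r = (\<Sum>k<n. c k * A r k))"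

lemma inspan_col: "k < n \<Longrightarrow> inspan (\<lambda>r. A r k)"
proof -
  assume k: "k < n"
  have "\<And>r. (\<Sum>ka<n. (if ka = k then 1 else 0) * A r ka) = (\<Sum>ka<n. if ka = k then A r ka else 0)"
    by (rule sum.cong) auto
  then show ?thesis using k unfolding inspan_def by (intro exI[of _ "\<lambda>k'. if k' = k then 1 else 0"]) simp
qed

lemma inspan_add: "inspan v \<Longrightarrow> inspan w \<Longrightarrow> inspan (\<lambda>r. v r + w r)"
  unfolding inspan_def
proof -
  assume "\<exists>c. \<forall>r<n. v r = (\<Sum>k<n. c k * A r k)" "\<exists>c. \<forall>r<n. w r = (\<Sum>k<n. c k * A r k)"
  then obtain c1 c2 where "\<forall>r<n. v r = (\<Sum>k<n. c1 k * A r k)" "\<forall>r<n. w r = (\<Sum>k<n. c2 k * A r k)" by blast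
  then show "\<exists>c. \<forall>r<n. v r + w r = (\<Sum>k<n. c k * A r k)"
    by (intro exI[of _ "\<lambda>k. c1 k + c2 k"]) (simp add: distrib_right sum.distrib)
qed

lemma inspan_smult: "inspan v \<Longrightarrow> inspan (\<lambda>r. a * v r)"
  unfolding inspan_def
proof -
  assume "\<exists>c. \<forall>r<n. v r = (\<Sum>k<n. c k * A r k)"
  then obtain c1 where "\<forall>r<n. v r = (\<Sum>k<n. c1 k * A r k)" by blast
  then show "\<exists>c. \<forall>r<n. a * v r = (\<Sum>k<n. c k * A r k)"
    by (intro exI[of _ "\<lambda>k. a * c1 k"]) (simp add: sum_distrib_left mult.assoc)
qed

lemma inspan_cong: "(\<And>r. r < n \<Longrightarrow> v r = w r) \<Longrightarrow> inspan w \<Longrightarrow> inspan v"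
  unfolding inspan_def by auto

lemma colsupp: "r \<noteq> 0 \<Longrightarrow> r \<noteq> m \<Longrightarrow> r \<noteq> k \<Longrightarrow> k < n-1 \<Longrightarrow> A r k = 0"
  by (cases "r < k") (auto intro: z low)

lemma colsupp_m: "r \<noteq> 0 \<Longrightarrow> r \<noteq> m \<Longrightarrow> A r m = 0"
  using colsupp mn by blast

lemma col0: "r \<noteq> 0 \<Longrightarrow> A r 0 = 0"
  using low by simp

definition Cond where "Cond \<longleftrightarrow> (\<forall>i j. m < i \<and> i < n-1 \<and> m < j \<and> j < n-1 \<longrightarrow>
   (\<exists>t. A m i * (A m j - (if i = j then P else 0)) = P^\<beta> * t \<and> P^2 dvd t * A 0 m))"

definition SR where "SR \<longleftrightarrow> (\<forall>i<n. \<forall>j<n. inspan (\<lambda>r. A r i * A r j))"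

lemma P2dvd: "0 < i \<Longrightarrow> i < n-1 \<Longrightarrow> 0 < j \<Longrightarrow> j < n-1 \<Longrightarrow> P^2 dvd A 0 i * A 0 j"
  using row0[of i] row0[of j] by (simp add: power2_eq_square mult_dvd_mono)

lemma pair: assumes C: Cond and ij: "i \<le> j" "j < n" shows "inspan (\<lambda>r. A r i * A r j)"
proof (cases "j = n - 1")
  case True
  show ?thesis
    by (rule inspan_cong[OF _ inspan_col[of i]]) (use True ij lastc in auto)
next
  case jn: False
  hence jn': "j < n - 1" using ij by auto
  show ?thesis
  proof (cases "i = 0")
    case True
    show ?thesis
    proof (rule inspan_cong[OF _ inspan_smult[where a="A 0 j", OF inspan_col[of 0]]])
      fix r assume "r < n" show "A r i * A r j = A 0 j * A r 0"
        using True col0[of r] by (cases "r = 0") auto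
    qed (use n3 in auto)
  next
    case i0: False
    show ?thesis
    proof (cases "i = m")
      case im: True
      show ?thesis
      proof (cases "j = m")
        case jm: True
        have "P^2 dvd A 0 m ^ 2 - P^\<beta> * A 0 m"
        proof (rule dvd_diff)
          show "P^2 dvd A 0 m ^ 2" using row0[of m] m1 mn by (simp add: power2_eq_square mult_dvd_mono)
          have "P^2 dvd P^\<beta>" using b2 by (simp add: le_imp_power_dvd)
          then show "P^2 dvd P^\<beta> * A 0 m" by simp
        qed
        then obtain w where w: "A 0 m ^ 2 - P^\<beta> * A 0 m = P^2 * w" by blast
        show ?thesis
        proof (rule inspan_cong[OF _ inspan_add[OF inspan_smult[where a="P^\<beta>", OF inspan_col[of m]] inspan_smult[where a=w, OF inspan_col[of 0]]]])
          fix r assume "r < n"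
          show "A r i * A r j = P^\<beta> * A r m + w * A r 0"
            using w im jm dm d0 m1 col0 colsupp_m[of r] by (cases "r = 0"; cases "r = m") (auto simp: power2_eq_square algebra_simps)
        qed (use mn in auto)
      next
        case jm: False
        hence mj: "m < j" using ij im by auto
        have "P^2 dvd A 0 m * A 0 j - A m j * A 0 m"
          using P2dvd[of m j] rowm[of j] row0[of m] mj jn' m1 mn
          by (intro dvd_diff) (auto simp: power2_eq_square mult_dvd_mono)
        then obtain w where w: "A 0 m * A 0 j - A m j * A 0 m = P^2 * w" by blast
        show ?thesis
        proof (rule inspan_cong[OF _ inspan_add[OF inspan_smult[where a="A m j", OF inspan_col[of m]] inspan_smult[where a=w, OF inspan_col[of 0]]]])
          fix r assume "r < n"
          show "A r i * A r j = A m j * A r m + w * A r 0"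
            using w im dm d0 m1 col0 colsupp_m[of r] by (cases "r = 0"; cases "r = m") (auto simp: algebra_simps)
        qed (use mn in auto)
      qed
    next
      case im: False
      show ?thesis
      proof (cases "j = m")
        case jm: True
        hence imm: "i < m" using ij im by auto
        have "P^2 dvd A 0 i * A 0 m" using P2dvd[of i m] i0 imm mn by auto
        then obtain w where w: "A 0 i * A 0 m = P^2 * w" by blast
        show ?thesis
        proof (rule inspan_cong[OF _ inspan_smult[where a=w, OF inspan_col[of 0]]])
          fix r assume "r < n"
          show "A r i * A r j = w * A r 0"
            using w jm imm d0 col0 colsupp_m[of r] low[of i m] by (cases "r = 0"; cases "r = m") (auto simp: algebra_simps)
        qed (use mn in auto)
      next
        case jm: False
        define \<delta> where "\<delta> = (if i = j then P else 0)"
        obtain t where t: "A m i * (A m j - \<delta>) = P^\<beta> * t" "P^2 dvd t * A 0 m"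
        proof (cases "m < i")
          case True
          then have "\<exists>t. A m i * (A m j - \<delta>) = P^\<beta> * t \<and> P^2 dvd t * A 0 m"
            using C ij jn' unfolding Cond_def \<delta>_def by simp
          then show ?thesis using that by blast
        next
          case False
          hence "A m i = 0" using im low[of i m] by auto
          then show ?thesis using that[of 0] by simp
        qed
        have "P^2 dvd A 0 i * A 0 j - \<delta> * A 0 i - t * A 0 m"
        proof (intro dvd_diff)
          show "P^2 dvd A 0 i * A 0 j" using P2dvd[of i j] i0 ij jn' by auto
          show "P^2 dvd \<delta> * A 0 i" using row0[of i] i0 ij jn' unfolding \<delta>_def
            by (auto simp: power2_eq_square mult_dvd_mono)
        qed (rule t(2))
        then obtain w where w: "A 0 i * A 0 j - \<delta> * A 0 i - t * A 0 m = P^2 * w" by blast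
        show ?thesis
        proof (rule inspan_cong[OF _ inspan_add[OF inspan_add[OF inspan_smult[where a=\<delta>, OF inspan_col[of i]] inspan_smult[where a=t, OF inspan_col[of m]]] inspan_smult[where a=w, OF inspan_col[of 0]]]])
          fix r assume r: "r < n"
          show "A r i * A r j = \<delta> * A r i + t * A r m + w * A r 0"
          proof (cases "r = 0")
            case True then show ?thesis using w d0 by (simp add: algebra_simps)
          next
            case r0: False
            show ?thesis
            proof (cases "r = m")
              case True then show ?thesis using t(1) dm col0 m1 by (simp add: algebra_simps)
            next
              case rm: False
              have e1: "A r m = 0" "A r 0 = 0" using colsupp_m[OF r0 rm] col0[OF r0] by auto
              show ?thesis
              proof (cases "r = i")
                case ri: True
                have "A i i = P" using dr[of i] i0 im ij jn' by auto
                moreover have "i \<noteq> j \<Longrightarrow> A i j = 0" using z[of i j] ij jn' i0 im by auto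
                ultimately show ?thesis using ri e1 unfolding \<delta>_def by auto
              next
                case False
                then have "A r i = 0" using colsupp[OF r0 rm False] ij jn' by auto
                then show ?thesis using e1 by simp
              qed
            qed
          qed
        qed (use mn ij in auto)
      qed
    qed
  qed
qed

lemma Cond_SR: "Cond \<Longrightarrow> SR"
  unfolding SR_def
proof (intro allI impI)
  fix i j assume C: Cond and "i < n" "j < n"
  show "inspan (\<lambda>r. A r i * A r j)"
  proof (cases "i \<le> j")
    case True then show ?thesis using pair[OF C True] \<open>j < n\<close> by auto
  next
    case False
    then have "inspan (\<lambda>r. A r j * A r i)" using pair[OF C, of j i] \<open>i < n\<close> by auto
    then show ?thesis by (simp add: mult.commute)
  qed
qed


lemma rs_other: assumes "r < n-1" "r \<noteq> 0" "r \<noteq> m"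
  shows "(\<Sum>k<n. c k * A r k) = c r * P + c (n-1)"
proof -
  have "(\<Sum>k<n. c k * A r k) = (\<Sum>k\<in>{r, n-1}. c k * A r k)"
  proof (rule sum.mono_neutral_right)
    show "\<forall>k\<in>{..<n} - {r, n - 1}. c k * A r k = 0"
    proof
      fix k assume k: "k \<in> {..<n} - {r, n - 1}"
      then have "A r k = 0" using assms by (cases "k < r") (auto intro: low z)
      then show "c k * A r k = 0" by simp
    qed
  qed (use assms in auto)
  also have "\<dots> = c r * P + c (n-1)" using assms dr[of r] lastc[of r] by auto
  finally show ?thesis .
qed

lemma rs_last: "(\<Sum>k<n. c k * A (n-1) k) = c (n-1)"
proof -
  have "(\<Sum>k<n. c k * A (n-1) k) = (\<Sum>k\<in>{n-1}. c k * A (n-1) k)"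
    by (rule sum.mono_neutral_right) (use n3 low in auto)
  then show ?thesis using lastc[of "n-1"] n3 by simp
qed

lemma SR_Cond: assumes S: SR shows Cond
  unfolding Cond_def
proof (intro allI impI)
  fix i j assume ij: "m < i \<and> i < n - 1 \<and> m < j \<and> j < n - 1"
  define \<delta> where "\<delta> = (if i = j then P else 0)"
  have "i < n" "j < n" using ij by auto
  then have "inspan (\<lambda>r. A r i * A r j)" using S unfolding SR_def by blast
  then obtain c where c: "\<And>r. r < n \<Longrightarrow> A r i * A r j = (\<Sum>k<n. c k * A r k)"
    unfolding inspan_def by blast
  have cl: "c (n-1) = 0"
    using c[of "n-1"] rs_last low[of i "n-1"] ij n3 by auto
  have ck: "c k = (if k = i then \<delta> else 0)" if k: "0 < k" "k < n-1" "k \<noteq> m" for k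
  proof -
    have e: "A k i * A k j = c k * P" using c[of k] rs_other[of k c] k cl by auto
    show ?thesis
    proof (cases "k = i")
      case True
      have "A i i = P" using dr[of i] ij m1 by auto
      moreover have "i \<noteq> j \<Longrightarrow> A i j = 0" using z[of i j] low[of j i] ij m1 by (cases "i < j") auto
      ultimately show ?thesis using e True P2 unfolding \<delta>_def by (cases "i = j") auto
    next
      case False
      then have "A k i = 0" using colsupp[of k i] k ij by auto
      then show ?thesis using e False P2 by auto
    qed
  qed
  have sm: "(\<Sum>k<n. c k * A m k) = (\<Sum>k<n. (if k = m then c m * P^\<beta> else 0) + (if k = i then \<delta> * A m i else 0))"
  proof (rule sum.cong)
    fix k assume "k \<in> {..<n}"
    then have k: "k < n" by auto
    show "c k * A m k = (if k = m then c m * P^\<beta> else 0) + (if k = i then \<delta> * A m i else 0)"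
    proof (cases "k = m")
      case True then show ?thesis using dm ij by auto
    next
      case km: False
      show ?thesis
      proof (cases "k = n-1")
        case True then show ?thesis using cl ij by auto
      next
        case False
        then have "k < n-1" using k by auto
        then show ?thesis using ck[of k] km low[of k m] m1 by (cases "k = 0") auto
      qed
    qed
  qed simp
  have s0: "(\<Sum>k<n. c k * A 0 k) = (\<Sum>k<n. (if k = 0 then c 0 * P^2 else 0) + ((if k = m then c m * A 0 m else 0) + (if k = i then \<delta> * A 0 i else 0)))"
  proof (rule sum.cong)
    fix k assume "k \<in> {..<n}"
    then have k: "k < n" by auto
    show "c k * A 0 k = (if k = 0 then c 0 * P^2 else 0) + ((if k = m then c m * A 0 m else 0) + (if k = i then \<delta> * A 0 i else 0))"
    proof (cases "k = 0")
      case True then show ?thesis using d0 ij m1 by auto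
    next
      case k0: False
      show ?thesis
      proof (cases "k = m")
        case True then show ?thesis using ij k0 by auto
      next
        case km: False
        show ?thesis
        proof (cases "k = n-1")
          case True then show ?thesis using cl ij by auto
        next
          case False
          then have "k < n-1" using k by auto
          then show ?thesis using ck[of k] km k0 by auto
        qed
      qed
    qed
  qed simp
  have mi: "m < n" "i < n" "0 < n" using mn ij by auto
  have em: "A m i * A m j = c m * P^\<beta> + \<delta> * A m i"
    using c[of m] sm mi by (simp add: sum.distrib)
  have e0: "A 0 i * A 0 j = c 0 * P^2 + (c m * A 0 m + \<delta> * A 0 i)"
    using c[of 0] s0 mi by (simp add: sum.distrib)
  have "P^2 dvd c m * A 0 m"
  proof -
    have "c m * A 0 m = A 0 i * A 0 j - \<delta> * A 0 i - P^2 * c 0" using e0 by (simp add: algebra_simps)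
    moreover have "P^2 dvd A 0 i * A 0 j - \<delta> * A 0 i - P^2 * c 0"
    proof (intro dvd_diff)
      show "P^2 dvd A 0 i * A 0 j" using P2dvd[of i j] ij m1 by auto
      show "P^2 dvd \<delta> * A 0 i" using row0[of i] ij m1 unfolding \<delta>_def
        by (auto simp: power2_eq_square mult_dvd_mono)
    qed simp
    ultimately show ?thesis by simp
  qed
  moreover have "A m i * (A m j - \<delta>) = P^\<beta> * c m" using em by (simp add: algebra_simps)
  ultimately show "\<exists>t. A m i * (A m j - (if i = j then P else 0)) = P ^ \<beta> * t \<and> P\<^sup>2 dvd t * A 0 m"
    unfolding \<delta>_def by blast
qed

lemma SR_iff: "SR \<longleftrightarrow> Cond" using SR_Cond Cond_SR by blast

lemma SR_iff': "(\<forall>i<n. \<forall>j<n. \<exists>c. \<forall>r<n. A r i * A r j = (\<Sum>k<n. c k * A r k)) \<longleftrightarrow> CondG P n m \<beta> A"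
  using SR_iff unfolding SR_def inspan_def Cond_def CondG_def by simp

end

definition Mat :: "nat \<Rightarrow> (nat \<Rightarrow> nat \<Rightarrow> int set) \<Rightarrow> (nat \<Rightarrow> nat \<Rightarrow> int) set" where
  "Mat n F = {A. \<forall>r s. A r s \<in> F r s}"

lemma card_Mat:
  assumes out: "\<And>r s. r \<ge> n \<or> s \<ge> n \<Longrightarrow> F r s = {0}" and fin: "\<And>r s. finite (F r s)"
  shows "card (Mat n F) = (\<Prod>r<n. \<Prod>s<n. card (F r s)) \<and> finite (Mat n F)"
proof -
  define h where "h = (\<lambda>B r s. if r < n \<and> s < n then B r s else (0::int))"
  define D where "D = PiE {..<n} (\<lambda>r. PiE {..<n} (F r))"
  have img: "Mat n F = h ` D"
  proof
    show "Mat n F \<subseteq> h ` D"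
    proof
      fix A assume A: "A \<in> Mat n F"
      define B where "B = restrict (\<lambda>r. restrict (A r) {..<n}) {..<n}"
      have "B \<in> D" using A unfolding B_def D_def Mat_def by auto
      moreover have "A = h B"
      proof (intro ext)
        fix r s
        have "A r s \<in> F r s" using A unfolding Mat_def by auto
        then show "A r s = h B r s"
          using out[of r s] unfolding h_def B_def by (cases "r < n \<and> s < n") auto
      qed
      ultimately show "A \<in> h ` D" by blast
    qed
  next
    show "h ` D \<subseteq> Mat n F"
      unfolding h_def D_def Mat_def using out by (auto simp: PiE_iff)
  qed
  have inj: "inj_on h D"
  proof
    fix B1 B2 assume B: "B1 \<in> D" "B2 \<in> D" "h B1 = h B2"
    show "B1 = B2"
    proof (rule PiE_ext[OF B(1)[unfolded D_def] B(2)[unfolded D_def]])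
      fix r assume r: "r \<in> {..<n}"
      show "B1 r = B2 r"
      proof (rule PiE_ext)
        show "B1 r \<in> PiE {..<n} (F r)" "B2 r \<in> PiE {..<n} (F r)" using B r unfolding D_def by auto
        fix s assume "s \<in> {..<n}"
        then show "B1 r s = B2 r s" using fun_cong[OF fun_cong[OF B(3), of r], of s] r unfolding h_def by auto
      qed
    qed
  qed
  have "card (Mat n F) = card D" using img inj by (simp add: card_image)
  also have "\<dots> = (\<Prod>r<n. \<Prod>s<n. card (F r s))" unfolding D_def by (simp add: card_PiE)
  finally show ?thesis using img fin unfolding D_def by (simp add: finite_PiE)
qed

lemma pp_dvd_split:
  fixes p x :: int
  assumes "prime p" "e \<ge> 1" "p^e dvd x * (x - 1)"
  shows "p^e dvd x \<or> p^e dvd x - 1"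
proof (cases "p dvd x")
  case True
  have "\<not> p dvd x - 1"
  proof
    assume "p dvd x - 1"
    then have "p dvd x - (x - 1)" using True by (simp only: dvd_diff)
    then have "p dvd 1" by simp
    then have "p \<le> 1" using zdvd_imp_le[of p 1] by linarith
    then show False using prime_ge_2_int[OF assms(1)] by simp
  qed
  have "p^e dvd (x - 1) * x" using assms(3) by (simp add: mult.commute)
  then have "p^e dvd x" using prime_power_dvd_multD[OF prime_imp_prime_elem[OF assms(1)], of e "x - 1" x] assms(2) \<open>\<not> p dvd x - 1\<close> by linarith
  then show ?thesis by simp
next
  case False
  then show ?thesis using prime_power_dvd_multD[OF prime_imp_prime_elem[OF assms(1)], of e x "x - 1"] assms(2,3) by linarith
qed

lemma nt:
  fixes p :: int and d :: "nat \<Rightarrow> int"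
  assumes p: "prime p" and e: "e \<ge> 1" and J0: "0 \<notin> J"
  shows "(\<forall>i\<in>J. \<forall>j\<in>J. p^e dvd d i * (d j - (if i = j then 1 else 0))) \<longleftrightarrow>
         (\<exists>j0\<in>insert 0 J. \<forall>j\<in>J. d j mod p^e = (if j = j0 then 1 else 0))"
proof -
  define Q where "Q = p^e"
  have p2: "p \<ge> 2" using p prime_ge_2_int by blast
  have "p^1 \<le> p^e" using p2 e by (intro power_increasing) auto
  then have Q2: "Q \<ge> 2" unfolding Q_def using p2 by simp
  show ?thesis
  proof
    assume H: "\<forall>i\<in>J. \<forall>j\<in>J. p^e dvd d i * (d j - (if i = j then 1 else 0))"
    have d01: "d j mod Q = 0 \<or> d j mod Q = 1" if "j \<in> J" for j
    proof -
      have "Q dvd d j * (d j - 1)" using H that unfolding Q_def by force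
      then have "Q dvd d j \<or> Q dvd d j - 1" using pp_dvd_split[OF p e] unfolding Q_def by blast
      moreover have "Q dvd d j - 1 \<Longrightarrow> d j mod Q = 1"
      proof -
        assume "Q dvd d j - 1"
        then have "d j mod Q = 1 mod Q" by (simp add: mod_eq_dvd_iff)
        then show ?thesis using Q2 by simp
      qed
      ultimately show ?thesis by auto
    qed
    have uniq: "False" if "i \<in> J" "j \<in> J" "i \<noteq> j" "d i mod Q = 1" "d j mod Q = 1" for i j
    proof -
      have "Q dvd d i * d j" using H that unfolding Q_def by force
      then have "(d i * d j) mod Q = 0" by simp
      moreover have "(d i * d j) mod Q = ((d i mod Q) * (d j mod Q)) mod Q" by (simp add: mod_mult_eq)
      then have "(d i * d j) mod Q = 1" using that Q2 by simp
      ultimately show False by simp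
    qed
    show "\<exists>j0\<in>insert 0 J. \<forall>j\<in>J. d j mod p^e = (if j = j0 then 1 else 0)"
    proof (cases "\<exists>a\<in>J. d a mod Q = 1")
      case True
      then obtain a where a: "a \<in> J" "d a mod Q = 1" by blast
      show ?thesis
      proof (rule bexI[of _ a])
        show "\<forall>j\<in>J. d j mod p^e = (if j = a then 1 else 0)"
        proof
          fix j assume j: "j \<in> J"
          show "d j mod p^e = (if j = a then 1 else 0)"
          proof (cases "j = a")
            case True then show ?thesis using a unfolding Q_def by simp
          next
            case False
            then have "d j mod Q \<noteq> 1" using uniq[of j a] j a by blast
            then show ?thesis using d01[OF j] False unfolding Q_def by auto
          qed
        qed
      qed (use a in auto)
    next
      case False
      have "\<forall>j\<in>J. d j mod p^e = (if j = 0 then 1 else 0)"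
      proof
        fix j assume j: "j \<in> J"
        have "j \<noteq> 0"
        proof
          assume "j = 0" then show False using J0 j by simp
        qed
        then show "d j mod p^e = (if j = 0 then 1 else 0)" using d01[OF j] False j unfolding Q_def by auto
      qed
      then show ?thesis by blast
    qed
  next
    assume "\<exists>j0\<in>insert 0 J. \<forall>j\<in>J. d j mod p^e = (if j = j0 then 1 else 0)"
    then obtain j0 where j0: "j0 \<in> insert 0 J" "\<forall>j\<in>J. d j mod Q = (if j = j0 then 1 else 0)"
      unfolding Q_def by blast
    show "\<forall>i\<in>J. \<forall>j\<in>J. p^e dvd d i * (d j - (if i = j then 1 else 0))"
    proof (intro ballI)
      fix i j assume ij: "i \<in> J" "j \<in> J"
      show "p^e dvd d i * (d j - (if i = j then 1 else 0))"
      proof (cases "i = j0")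
        case True
        have "(d j - (if i = j then 1 else 0)) mod Q = 0"
          using j0(2) ij True by (cases "i = j") (auto simp: mod_diff_left_eq[symmetric])
        then show ?thesis unfolding Q_def by (simp add: dvd_eq_mod_eq_0[symmetric] dvd_mult)
      next
        case False
        then have "d i mod Q = 0" using j0(2) ij by auto
        then show ?thesis unfolding Q_def by (simp add: dvd_eq_mod_eq_0[symmetric])
      qed
    qed
  qed
qed

locale cset =
  fixes p n m \<beta> :: nat
  assumes pr: "prime p" and n3: "n \<ge> 3" and m1: "1 \<le> m" and mn: "m < n - 1" and b3: "\<beta> > 2"
begin

abbreviation P where "P \<equiv> int p"

definition ex :: "nat \<Rightarrow> nat" where "ex r = (if r = 0 then 2 else if r = m then \<beta> else 1)"

definition F :: "nat \<Rightarrow> nat \<Rightarrow> int set" where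
  "F r s = (if n \<le> r \<or> n \<le> s then {0} else if s < r then {0} else if s = n-1 then {1}
     else if r = s then {P ^ ex r} else {v. \<exists>a. v = P * a \<and> 0 \<le> P * a \<and> P * a < P ^ ex r})"

lemma F_out: "n \<le> r \<or> n \<le> s \<Longrightarrow> F r s = {0}" unfolding F_def by simp
lemma F_low: "s < r \<Longrightarrow> F r s = {0}" unfolding F_def by simp
lemma F_last: "r < n \<Longrightarrow> F r (n-1) = {1}"
proof -
  assume "r < n" then have "\<not> n \<le> n - 1" "\<not> n - 1 < r" "\<not> n \<le> r" by auto
  then show ?thesis unfolding F_def by simp
qed
lemma F_diag: "r < n - 1 \<Longrightarrow> F r r = {P ^ ex r}"
proof -
  assume "r < n - 1" then have "\<not> n \<le> r" "r \<noteq> n - 1" by auto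
  then show ?thesis unfolding F_def by simp
qed
lemma F_inner: "r < s \<Longrightarrow> s < n - 1 \<Longrightarrow> F r s = {v. \<exists>a. v = P * a \<and> 0 \<le> P * a \<and> P * a < P ^ ex r}"
proof -
  assume "r < s" "s < n - 1" then have "\<not> (n \<le> r \<or> n \<le> s)" "\<not> s < r" "s \<noteq> n - 1" "r \<noteq> s" by auto
  then show ?thesis unfolding F_def by simp
qed
lemma ex0: "ex 0 = 2" and exm: "ex m = \<beta>" and exr: "r \<noteq> 0 \<Longrightarrow> r \<noteq> m \<Longrightarrow> ex r = 1"
  using m1 unfolding ex_def by auto

lemma p2: "p \<ge> 2" using pr prime_ge_2_nat by blast
lemma P2: "P \<ge> 2" using p2 by simp

lemma subring_eq:
  assumes len: "length e = n - 1" and en: "\<And>r. r < n - 1 \<Longrightarrow> e ! r = ex r"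
  shows "subring_matrices p e = {A \<in> Mat n F. (\<forall>i<n. \<forall>j<n. \<exists>c. \<forall>r<n. A r i * A r j = (\<Sum>k<n. c k * A r k))}"
proof -
  have ln: "length e + 1 = n" using len n3 by simp
  have shape: "((\<forall>r s. (r \<ge> n \<or> s \<ge> n) \<longrightarrow> A r s = 0)
       \<and> (\<forall>r<n. \<forall>s<n. s < r \<longrightarrow> A r s = 0)
       \<and> (\<forall>r<n - 1. A r r = int p ^ (e ! r))
       \<and> (\<forall>r<n. A r (n - 1) = 1)
       \<and> (\<forall>r s. r < s \<and> s < n - 1 \<longrightarrow>
             (\<exists>a::int. A r s = int p * a \<and> 0 \<le> int p * a \<and> int p * a < int p ^ (e ! r))))
       \<longleftrightarrow> A \<in> Mat n F" for A
  proof
    assume H: "(\<forall>r s. (r \<ge> n \<or> s \<ge> n) \<longrightarrow> A r s = 0)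
       \<and> (\<forall>r<n. \<forall>s<n. s < r \<longrightarrow> A r s = 0)
       \<and> (\<forall>r<n - 1. A r r = int p ^ (e ! r))
       \<and> (\<forall>r<n. A r (n - 1) = 1)
       \<and> (\<forall>r s. r < s \<and> s < n - 1 \<longrightarrow>
             (\<exists>a::int. A r s = int p * a \<and> 0 \<le> int p * a \<and> int p * a < int p ^ (e ! r)))"
    have H1: "\<And>r s. (r \<ge> n \<or> s \<ge> n) \<Longrightarrow> A r s = 0" using H by blast
    have H2: "\<And>r s. r < n \<Longrightarrow> s < n \<Longrightarrow> s < r \<Longrightarrow> A r s = 0" using H by blast
    have H3: "\<And>r. r < n - 1 \<Longrightarrow> A r r = int p ^ (e ! r)" using H by blast
    have H4: "\<And>r. r < n \<Longrightarrow> A r (n - 1) = 1" using H by blast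
    have H5: "\<And>r s. r < s \<Longrightarrow> s < n - 1 \<Longrightarrow>
             (\<exists>a::int. A r s = int p * a \<and> 0 \<le> int p * a \<and> int p * a < int p ^ (e ! r))" using H by blast
    show "A \<in> Mat n F" unfolding Mat_def
    proof (intro CollectI allI)
      fix r s
      show "A r s \<in> F r s"
      proof (cases "n \<le> r \<or> n \<le> s")
        case True then show ?thesis using H1[of r s] unfolding F_def by simp
      next
        case False
        then have rs: "r < n" "s < n" by auto
        show ?thesis
        proof (cases "s < r")
          case True then show ?thesis using H2[of r s] rs unfolding F_def by simp
        next
          case sr: False
          show ?thesis
          proof (cases "s = n - 1")
            case True then show ?thesis using H4[of r] rs sr unfolding F_def by simp
          next
            case sn: False
            then have s1: "s < n - 1" using rs by auto
            show ?thesis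
            proof (cases "r = s")
              case True then show ?thesis using H3[of r] rs s1 en[of r] unfolding F_def by simp
            next
              case False
              then have "r < s" using sr by auto
              then show ?thesis using H5[of r s] rs s1 sr sn en[of r] False unfolding F_def by simp
            qed
          qed
        qed
      qed
    qed
  next
    assume A: "A \<in> Mat n F"
    then have M: "\<And>r s. A r s \<in> F r s" unfolding Mat_def by auto
    show "(\<forall>r s. (r \<ge> n \<or> s \<ge> n) \<longrightarrow> A r s = 0)
       \<and> (\<forall>r<n. \<forall>s<n. s < r \<longrightarrow> A r s = 0)
       \<and> (\<forall>r<n - 1. A r r = int p ^ (e ! r))
       \<and> (\<forall>r<n. A r (n - 1) = 1)
       \<and> (\<forall>r s. r < s \<and> s < n - 1 \<longrightarrow>
             (\<exists>a::int. A r s = int p * a \<and> 0 \<le> int p * a \<and> int p * a < int p ^ (e ! r)))"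
    proof (intro conjI allI impI)
      fix r s assume "r \<ge> n \<or> s \<ge> n" then show "A r s = 0" using M[of r s] unfolding F_def by auto
    next
      fix r s assume "r < n" "s < n" "s < r" then show "A r s = 0" using M[of r s] unfolding F_def by auto
    next
      fix r assume r: "r < n - 1"
      then have "\<not> n \<le> r" "r \<noteq> n - 1" by auto
      then show "A r r = int p ^ (e ! r)" using M[of r r] en[OF r] unfolding F_def by simp
    next
      fix r assume r: "r < n"
      then have "\<not> n \<le> n - 1" "\<not> n - 1 < r" using n3 by auto
      then show "A r (n - 1) = 1" using M[of r "n-1"] unfolding F_def by simp
    next
      fix r s assume "r < s \<and> s < n - 1"
      then show "\<exists>a::int. A r s = int p * a \<and> 0 \<le> int p * a \<and> int p * a < int p ^ (e ! r)"
        using M[of r s] en[of r] F_inner[of r s] by simp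
    qed
  qed
  show ?thesis unfolding subring_matrices_def Let_def ln
    by (rule Collect_cong) (simp only: shape[symmetric] conj_assoc)
qed

lemma shp_inst: assumes A: "A \<in> Mat n F" shows "shp P n m \<beta> A"
proof -
  have M: "\<And>r s. A r s \<in> F r s" using A unfolding Mat_def by auto
  have z1: "A r s = 0" if "r < s" "s < n-1" "r \<noteq> 0" "r \<noteq> m" for r s
  proof -
    have "\<not> (n \<le> r \<or> n \<le> s)" "\<not> s < r" "s \<noteq> n - 1" "r \<noteq> s" "ex r = 1" using that unfolding ex_def by auto
    then have "A r s \<in> {v. \<exists>a. v = P * a \<and> 0 \<le> P * a \<and> P * a < P ^ 1}" using M[of r s] unfolding F_def by simp
    then obtain a where a: "A r s = P * a" "0 \<le> P * a" "P * a < P" by auto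
    then have "0 \<le> a" "a < 1" using P2 by (auto simp: zero_le_mult_iff)
    then show ?thesis using a by auto
  qed
  show ?thesis
  proof
    show "2 \<le> P" using P2 .
    show "3 \<le> n" "1 \<le> m" "m < n - 1" "2 \<le> \<beta>" using n3 m1 mn b3 by auto
  next
    fix r s assume "n \<le> r \<or> n \<le> s" then show "A r s = 0" using M[of r s] unfolding F_def by auto
  next
    fix r s :: nat assume rs: "s < r"
    show "A r s = 0"
    proof (cases "r < n")
      case True then show ?thesis using M[of r s] rs unfolding F_def by auto
    next
      case False then show ?thesis using M[of r s] unfolding F_def by auto
    qed
  next
    fix r assume r: "r < n"
    then have "\<not> n \<le> n - 1" "\<not> n - 1 < r" using n3 by auto
    then show "A r (n - 1) = 1" using M[of r "n-1"] unfolding F_def by simp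
  next
    show "A 0 0 = P^2" using M[of 0 0] n3 F_diag[of 0] ex0 by auto
    show "A m m = P^\<beta>" using M[of m m] mn F_diag[of m] exm by auto
  next
    fix r assume "0 < r" "r < n - 1" "r \<noteq> m" then show "A r r = P" using M[of r r] F_diag[of r] exr[of r] by auto
  next
    fix r s assume "r < s" "s < n - 1" "r \<noteq> 0" "r \<noteq> m" then show "A r s = 0" using z1 by auto
  next
    fix s assume "0 < s" "s < n - 1" then show "P dvd A 0 s" using M[of 0 s] F_inner[of 0 s] by auto
  next
    fix s assume "m < s" "s < n - 1" then show "P dvd A m s" using M[of m s] F_inner[of m s] by auto
  qed
qed

lemma subring_eq2:
  assumes len: "length e = n - 1" and en: "\<And>r. r < n - 1 \<Longrightarrow> e ! r = ex r"
  shows "subring_matrices p e = {A \<in> Mat n F. CondG P n m \<beta> A}"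
proof -
  have e: "\<And>A. A \<in> Mat n F \<Longrightarrow> (\<forall>i<n. \<forall>j<n. \<exists>c. \<forall>r<n. A r i * A r j = (\<Sum>k<n. c k * A r k)) = CondG P n m \<beta> A"
    by (rule shp.SR_iff'[OF shp_inst])
  have "subring_matrices p e = {A \<in> Mat n F. (\<forall>i<n. \<forall>j<n. \<exists>c. \<forall>r<n. A r i * A r j = (\<Sum>k<n. c k * A r k))}"
    by (rule subring_eq[OF len en])
  also have "\<dots> = {A \<in> Mat n F. CondG P n m \<beta> A}" by (rule Collect_cong) (use e in blast)
  finally show ?thesis .
qed

end

lemma Hlem:
  fixes P X a :: int
  assumes pr: "prime P" and b: "\<beta> \<ge> 2" and a: "0 \<le> a" "a < P"
  shows "(\<exists>t. P^2 * X = P^\<beta> * t \<and> P^2 dvd t * (P * a)) \<longleftrightarrow>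
         (if a = 0 then P^(\<beta>-2) dvd X else P^(\<beta>-1) dvd X)"
proof -
  have P0: "P \<noteq> 0" using pr by auto
  have pb0: "P^2 * P^(\<beta>-2) = P^(2 + (\<beta>-2))" by (rule power_add[symmetric])
  have "2 + (\<beta> - 2) = \<beta>" using b by simp
  then have pb: "P^\<beta> = P^2 * P^(\<beta>-2)" using pb0 by simp
  have bb: "\<beta> - 1 = Suc (\<beta> - 2)" using b by simp
  have pb1: "P^(\<beta>-1) = P^(\<beta>-2) * P" unfolding bb by (simp add: mult.commute)
  have e1: "P^2 * X = P^\<beta> * t \<longleftrightarrow> X = P^(\<beta>-2) * t" for t
    using P0 unfolding pb by (simp add: mult.assoc)
  show ?thesis
  proof (cases "a = 0")
    case True
    then show ?thesis using e1 by (auto simp: dvd_def)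
  next
    case False
    have "\<not> P dvd a"
    proof
      assume "P dvd a" then have "P \<le> a" using False a by (simp add: zdvd_imp_le)
      then show False using a by simp
    qed
    then have e2: "P^2 dvd t * (P * a) \<longleftrightarrow> P dvd t" for t
      using P0 pr by (simp add: power2_eq_square mult.commute mult.left_commute prime_dvd_mult_iff)
    have "(\<exists>t. X = P^(\<beta>-2) * t \<and> P dvd t) \<longleftrightarrow> P^(\<beta>-1) dvd X"
    proof
      assume "\<exists>t. X = P^(\<beta>-2) * t \<and> P dvd t"
      then obtain t u where "X = P^(\<beta>-2) * t" "t = P * u" by (auto simp: dvd_def)
      then show "P^(\<beta>-1) dvd X" unfolding pb1 by (simp add: mult.assoc)
    next
      assume "P^(\<beta>-1) dvd X"
      then obtain u where "X = P^(\<beta>-1) * u" by (auto simp: dvd_def)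
      then show "\<exists>t. X = P^(\<beta>-2) * t \<and> P dvd t" unfolding pb1 by (intro exI[of _ "P * u"]) (simp add: mult.assoc)
    qed
    then show ?thesis using e1 e2 False by simp
  qed
qed

context cset begin

definition J where "J = {m<..<n-1}"
definition I where "I = insert 0 J"
definition G where "G X Y r s = (if r = 0 \<and> s = m then X else if r = m \<and> s \<in> J then Y s else F r s)"
definition Y0 where "Y0 j0 s = (\<lambda>d. P * d) ` {d. 0 \<le> d \<and> d < P^(\<beta>-1) \<and> d mod P^(\<beta>-2) = (if s = j0 then 1 else 0)}"
definition X1 where "X1 = (\<lambda>a. P * a) ` {1..<P}"
definition Y1 where "Y1 j0 s = {if s = j0 then P else (0::int)}"

lemma J_iff: "s \<in> J \<longleftrightarrow> m < s \<and> s < n - 1" unfolding J_def by auto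
lemma zero_notin_J: "0 \<notin> J" unfolding J_def by auto

lemma F0m: "F 0 m = {v. \<exists>a. v = P * a \<and> 0 \<le> P * a \<and> P * a < P^2}"
  using F_inner[of 0 m] m1 mn ex0 by auto
lemma Fms: "s \<in> J \<Longrightarrow> F m s = {v. \<exists>a. v = P * a \<and> 0 \<le> P * a \<and> P * a < P^\<beta>}"
  using F_inner[of m s] exm unfolding J_def by auto

lemma Mat_G:
  assumes X: "X \<subseteq> F 0 m" and Y: "\<And>s. s \<in> J \<Longrightarrow> Y s \<subseteq> F m s"
  shows "A \<in> Mat n (G X Y) \<longleftrightarrow> (A \<in> Mat n F \<and> A 0 m \<in> X \<and> (\<forall>s\<in>J. A m s \<in> Y s))"
proof
  assume H: "A \<in> Mat n (G X Y)"
  then have H': "\<And>r s. A r s \<in> G X Y r s" unfolding Mat_def by auto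
  have "A r s \<in> F r s" for r s
    using H'[of r s] X Y[of s] unfolding G_def by (auto split: if_splits)
  moreover have "A 0 m \<in> X" using H'[of 0 m] unfolding G_def by simp
  moreover have "\<forall>s\<in>J. A m s \<in> Y s" using H' m1 unfolding G_def by (metis not_one_le_zero)
  ultimately show "A \<in> Mat n F \<and> A 0 m \<in> X \<and> (\<forall>s\<in>J. A m s \<in> Y s)" unfolding Mat_def by auto
next
  assume "A \<in> Mat n F \<and> A 0 m \<in> X \<and> (\<forall>s\<in>J. A m s \<in> Y s)"
  then show "A \<in> Mat n (G X Y)" unfolding Mat_def G_def by auto
qed

lemma Pm: "P * x < P * y \<longleftrightarrow> x < y" using P2 by simp

lemma pow_split: "P^\<beta> = P * P^(\<beta>-1)" using b3 by (simp add: power_Suc[symmetric])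

lemma sub0: "{0} \<subseteq> F 0 m" unfolding F0m using P2 by auto
lemma subX1: "X1 \<subseteq> F 0 m"
proof
  fix v assume "v \<in> X1"
  then obtain a where a: "v = P * a" "1 \<le> a" "a < P" unfolding X1_def by auto
  then have "P * a < P * P" using Pm by simp
  then show "v \<in> F 0 m" unfolding F0m using a P2 by (auto simp: power2_eq_square)
qed
lemma subY0: "s \<in> J \<Longrightarrow> Y0 j0 s \<subseteq> F m s"
proof
  fix v assume s: "s \<in> J" and "v \<in> Y0 j0 s"
  then obtain d where d: "v = P * d" "0 \<le> d" "d < P^(\<beta>-1)" unfolding Y0_def by auto
  then have "P * d < P * P^(\<beta>-1)" using Pm by simp
  then show "v \<in> F m s" unfolding Fms[OF s] using d P2 pow_split by auto
qed
lemma subY1: "s \<in> J \<Longrightarrow> Y1 j0 s \<subseteq> F m s"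
proof
  fix v assume s: "s \<in> J" and v: "v \<in> Y1 j0 s"
  have h: "1 < P^(\<beta>-1)" using P2 b3 by (intro one_less_power) auto
  have "P * 1 < P * P^(\<beta>-1)" using h P2 by (intro mult_strict_left_mono) auto
  then show "v \<in> F m s" unfolding Fms[OF s] using v P2 pow_split unfolding Y1_def
    by (cases "s = j0") (auto intro: exI[of _ 1] exI[of _ 0])
qed

lemma key:
  assumes A: "A \<in> Mat n F"
  shows "CondG P n m \<beta> A \<longleftrightarrow>
     ((A 0 m = 0 \<and> (\<exists>j0\<in>I. \<forall>s\<in>J. A m s \<in> Y0 j0 s)) \<or> (A 0 m \<in> X1 \<and> (\<exists>j0\<in>I. \<forall>s\<in>J. A m s \<in> Y1 j0 s)))"
proof -
  have M: "\<And>r s. A r s \<in> F r s" using A unfolding Mat_def by auto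
  have prP: "prime P" using pr by simp
  obtain a where a: "A 0 m = P * a" "0 \<le> P * a" "P * a < P^2" using M[of 0 m] unfolding F0m by auto
  have a0: "0 \<le> a" "a < P" using a P2 Pm[of a P] by (auto simp: power2_eq_square zero_le_mult_iff)
  define d where "d s = A m s div P" for s
  have dA: "A m s = P * d s \<and> 0 \<le> d s \<and> d s < P^(\<beta>-1)" if s: "s \<in> J" for s
  proof -
    obtain b where b: "A m s = P * b" "0 \<le> P * b" "P * b < P^\<beta>" using M[of m s] unfolding Fms[OF s] by auto
    have "d s = b" unfolding d_def b(1) using P2 by simp
    moreover have "0 \<le> b" using b P2 by (auto simp: zero_le_mult_iff)
    moreover have "b < P^(\<beta>-1)" using b(3) unfolding pow_split Pm .
    ultimately show ?thesis using b by simp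
  qed
  define X where "X i j = d i * (d j - (if i = j then 1 else 0))" for i j
  have C1: "CondG P n m \<beta> A \<longleftrightarrow> (\<forall>i\<in>J. \<forall>j\<in>J. \<exists>t. P^2 * X i j = P^\<beta> * t \<and> P^2 dvd t * (P * a))"
  proof -
    have "A m i * (A m j - (if i = j then P else 0)) = P^2 * X i j" if "i \<in> J" "j \<in> J" for i j
      using dA[OF that(1)] dA[OF that(2)] unfolding X_def
      by (cases "i = j") (auto simp: power2_eq_square algebra_simps)
    note eq = this
    have "CondG P n m \<beta> A \<longleftrightarrow> (\<forall>i\<in>J. \<forall>j\<in>J. \<exists>t. A m i * (A m j - (if i = j then P else 0)) = P^\<beta> * t \<and> P^2 dvd t * A 0 m)"
      unfolding CondG_def Ball_def J_iff by blast
    also have "\<dots> \<longleftrightarrow> (\<forall>i\<in>J. \<forall>j\<in>J. \<exists>t. P^2 * X i j = P^\<beta> * t \<and> P^2 dvd t * (P * a))"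
      using eq a(1) by simp
    finally show ?thesis .
  qed
  also have "\<dots> \<longleftrightarrow> (\<forall>i\<in>J. \<forall>j\<in>J. (if a = 0 then P^(\<beta>-2) dvd X i j else P^(\<beta>-1) dvd X i j))"
    using Hlem[OF prP _ a0, of \<beta>] b3 by simp
  finally have C2: "CondG P n m \<beta> A \<longleftrightarrow> (\<forall>i\<in>J. \<forall>j\<in>J. (if a = 0 then P^(\<beta>-2) dvd X i j else P^(\<beta>-1) dvd X i j))" .
  show ?thesis
  proof (cases "a = 0")
    case True
    have nX: "A 0 m \<notin> X1" using True a(1) unfolding X1_def using P2 by auto
    have "CondG P n m \<beta> A \<longleftrightarrow> (\<exists>j0\<in>I. \<forall>j\<in>J. d j mod P^(\<beta>-2) = (if j = j0 then 1 else 0))"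
      unfolding C2 I_def using nt[OF prP _ zero_notin_J, of "\<beta>-2" d] b3 True unfolding X_def by simp
    also have "\<dots> \<longleftrightarrow> (\<exists>j0\<in>I. \<forall>s\<in>J. A m s \<in> Y0 j0 s)"
    proof -
      have "A m s \<in> Y0 j0 s \<longleftrightarrow> d s mod P^(\<beta>-2) = (if s = j0 then 1 else 0)" if s: "s \<in> J" for s j0
      proof -
        have "A m s \<in> Y0 j0 s \<longleftrightarrow> d s \<in> {d. 0 \<le> d \<and> d < P^(\<beta>-1) \<and> d mod P^(\<beta>-2) = (if s = j0 then 1 else 0)}"
          unfolding Y0_def dA[OF s, THEN conjunct1] using P2 by (auto)
        then show ?thesis using dA[OF s] by simp
      qed
      then show ?thesis by auto
    qed
    finally show ?thesis using True a(1) nX by simp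
  next
    case False
    have inX: "A 0 m \<in> X1" using False a0 a(1) unfolding X1_def by auto
    have n0: "A 0 m \<noteq> 0" using False a(1) P2 by simp
    have "CondG P n m \<beta> A \<longleftrightarrow> (\<exists>j0\<in>I. \<forall>j\<in>J. d j mod P^(\<beta>-1) = (if j = j0 then 1 else 0))"
      unfolding C2 I_def using nt[OF prP _ zero_notin_J, of "\<beta>-1" d] b3 False unfolding X_def by simp
    also have "\<dots> \<longleftrightarrow> (\<exists>j0\<in>I. \<forall>s\<in>J. A m s \<in> Y1 j0 s)"
    proof -
      have "A m s \<in> Y1 j0 s \<longleftrightarrow> d s mod P^(\<beta>-1) = (if s = j0 then 1 else 0)" if s: "s \<in> J" for s j0
      proof -
        have "d s mod P^(\<beta>-1) = d s" using dA[OF s] by simp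
        moreover have "A m s \<in> Y1 j0 s \<longleftrightarrow> d s = (if s = j0 then 1 else 0)"
          unfolding Y1_def dA[OF s, THEN conjunct1] using P2 by auto
        ultimately show ?thesis by simp
      qed
      then show ?thesis by auto
    qed
    finally show ?thesis using inX n0 by simp
  qed
qed

lemma Mat_G0: "A \<in> Mat n (G {0} (Y0 j0)) \<longleftrightarrow> (A \<in> Mat n F \<and> A 0 m = 0 \<and> (\<forall>s\<in>J. A m s \<in> Y0 j0 s))"
  using Mat_G[OF sub0 subY0] by simp
lemma Mat_G1: "A \<in> Mat n (G X1 (Y1 j0)) \<longleftrightarrow> (A \<in> Mat n F \<and> A 0 m \<in> X1 \<and> (\<forall>s\<in>J. A m s \<in> Y1 j0 s))"
  using Mat_G[OF subX1 subY1] by simp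

lemma decomp: "{A \<in> Mat n F. CondG P n m \<beta> A} =
   (\<Union>j0\<in>I. Mat n (G {0} (Y0 j0))) \<union> (\<Union>j0\<in>I. Mat n (G X1 (Y1 j0)))"
proof (rule set_eqI)
  fix A
  show "A \<in> {A \<in> Mat n F. CondG P n m \<beta> A} \<longleftrightarrow>
   A \<in> (\<Union>j0\<in>I. Mat n (G {0} (Y0 j0))) \<union> (\<Union>j0\<in>I. Mat n (G X1 (Y1 j0)))"
  proof (cases "A \<in> Mat n F")
    case True
    show ?thesis unfolding UN_iff Un_iff mem_Collect_eq Mat_G0 Mat_G1 key[OF True] using True by blast
  next
    case False
    then show ?thesis unfolding UN_iff Un_iff mem_Collect_eq Mat_G0 Mat_G1 by blast
  qed
qed

end

context cset begin

lemma finite_mults: "finite {v. \<exists>a. v = P * a \<and> 0 \<le> P * a \<and> P * a < K}"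
  by (rule finite_subset[of _ "{0..<K}"]) auto

lemma card_mults: assumes k: "k \<ge> 1"
  shows "card {v. \<exists>a. v = P * a \<and> 0 \<le> P * a \<and> P * a < P^k} = p^(k-1)"
proof -
  have pk: "P^k = P * P^(k-1)" using k by (simp add: power_Suc[symmetric])
  have "{v. \<exists>a. v = P * a \<and> 0 \<le> P * a \<and> P * a < P^k} = (\<lambda>a. P * a) ` {0..<P^(k-1)}"
    unfolding pk using P2 by (auto simp: zero_le_mult_iff)
  moreover have "inj_on (\<lambda>a. P * a) {0..<P^(k-1)}" using P2 by (auto intro: inj_onI)
  ultimately have "card {v. \<exists>a. v = P * a \<and> 0 \<le> P * a \<and> P * a < P^k} = card {0..<P^(k-1)}"
    by (simp add: card_image)
  also have "\<dots> = p^(k-1)" by (simp add: of_nat_power[symmetric] del: of_nat_power)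
  finally show ?thesis .
qed

lemma card_Y0: "card (Y0 j0 s) = p \<and> finite (Y0 j0 s)"
proof -
  define q where "q = P^(\<beta>-2)"
  define c where "c = (if s = j0 then 1 else (0::int))"
  have q2: "q \<ge> 2"
  proof -
    have "p^1 \<le> p^(\<beta>-2)" using p2 b3 by (intro power_increasing) auto
    then have "2 \<le> p^(\<beta>-2)" using p2 by simp
    then have "(2::int) \<le> int (p^(\<beta>-2))" by linarith
    then show ?thesis unfolding q_def by simp
  qed
  have c: "0 \<le> c" "c < q" using q2 unfolding c_def by auto
  have bb: "\<beta> - 1 = Suc (\<beta> - 2)" using b3 by simp
  have pq: "P^(\<beta>-1) = q * P" unfolding bb q_def by (simp add: mult.commute)
  define D where "D = {d. 0 \<le> d \<and> d < P^(\<beta>-1) \<and> d mod q = c}"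
  have Deq: "D = (\<lambda>t. c + q * t) ` {0..<P}"
  proof
    show "D \<subseteq> (\<lambda>t. c + q * t) ` {0..<P}"
    proof
      fix d assume "d \<in> D"
      then have d: "0 \<le> d" "d < q * P" "d mod q = c" unfolding D_def pq by auto
      have "d = c + q * (d div q)" using d(3) by (metis mult_div_mod_eq add.commute)
      moreover have "0 \<le> d div q" using d q2 by (simp add: pos_imp_zdiv_nonneg_iff)
      moreover have "d div q < P"
      proof -
        have e1: "q * (d div q) + d mod q = d" by (rule mult_div_mod_eq)
        have "0 \<le> d mod q" using q2 by simp
        then have "q * (d div q) \<le> d" using e1 by linarith
        then have "q * (d div q) < q * P" using d by linarith
        then show ?thesis using q2 by simp
      qed
      ultimately show "d \<in> (\<lambda>t. c + q * t) ` {0..<P}" by (intro image_eqI[where x="d div q"]) auto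
    qed
  next
    show "(\<lambda>t. c + q * t) ` {0..<P} \<subseteq> D"
    proof
      fix d assume "d \<in> (\<lambda>t. c + q * t) ` {0..<P}"
      then obtain t where t0: "t \<in> {0..<P}" and t1: "d = c + q * t" by (rule imageE)
      then have t: "d = c + q * t" "0 \<le> t" "t < P" by auto
      have "t + 1 \<le> P" using t by linarith
      then have "q * (t + 1) \<le> q * P" using q2 by (intro mult_left_mono) auto
      then have "q * t + q \<le> q * P" by (simp add: distrib_left)
      then have "d < q * P" using t c by linarith
      moreover have "d mod q = c" using t c by simp
      moreover have "0 \<le> d" using t c q2 by simp
      ultimately show "d \<in> D" unfolding D_def pq by simp
    qed
  qed
  have inj1: "inj_on (\<lambda>t. c + q * t) {0..<P}" using q2 by (auto intro: inj_onI)
  have cD: "card D = p" unfolding Deq using inj1 by (simp add: card_image)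
  have Y: "Y0 j0 s = (\<lambda>d. P * d) ` D" unfolding Y0_def D_def q_def c_def by simp
  have inj2: "inj_on (\<lambda>d. P * d) D" using P2 by (auto intro: inj_onI)
  show ?thesis unfolding Y using inj2 cD Deq by (simp add: card_image)
qed

lemma card_X1: "card X1 = p - 1 \<and> finite X1"
proof -
  have "inj_on (\<lambda>a. P * a) {1..<P}" using P2 by (auto intro: inj_onI)
  then show ?thesis unfolding X1_def by (simp add: card_image nat_diff_distrib)
qed

lemma card_Y1: "card (Y1 j0 s) = 1 \<and> finite (Y1 j0 s)" unfolding Y1_def by simp

lemma finite_F: "finite (F r s)" unfolding F_def using finite_mults by auto

lemma card_J: "card J = n - 2 - m" unfolding J_def by simp

end

context cset begin

definition kap where "kap cX cY r s = (if r = 0 \<and> s = m then cX else if r = m \<and> s \<in> J then cY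
   else if r = 0 \<and> 0 < s \<and> s < n - 1 then p else (1::nat))"

lemma cardG_entry:
  assumes cX: "card X = cX" and cY: "\<And>s. s \<in> J \<Longrightarrow> card (Y s) = cY" and r: "r < n" and s: "s < n"
  shows "card (G X Y r s) = kap cX cY r s"
proof (cases "r = 0 \<and> s = m")
  case True then show ?thesis unfolding G_def kap_def using cX by simp
next
  case nX: False
  show ?thesis
  proof (cases "r = m \<and> s \<in> J")
    case True then show ?thesis unfolding G_def kap_def using cY m1 by auto
  next
    case nY: False
    then have GF: "G X Y r s = F r s" using nX unfolding G_def by auto
    have k: "kap cX cY r s = (if r = 0 \<and> 0 < s \<and> s < n - 1 then p else 1)" using nX nY unfolding kap_def by auto
    show ?thesis
    proof (cases "s < r")
      case True then show ?thesis using GF k F_low by auto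
    next
      case sr: False
      show ?thesis
      proof (cases "s = n - 1")
        case True then show ?thesis using GF k F_last[OF r] by auto
      next
        case sn: False
        then have s1: "s < n - 1" using s by auto
        show ?thesis
        proof (cases "r = s")
          case True then show ?thesis using GF k F_diag[OF s1[folded True]] by auto
        next
          case rs: False
          then have rls: "r < s" using sr by auto
          have rm: "r \<noteq> m" using nY rls s1 unfolding J_def by auto
          show ?thesis
          proof (cases "r = 0")
            case True
            then show ?thesis using GF k F_inner[OF rls s1] card_mults[of 2] ex0 rls s1 by simp
          next
            case False
            then show ?thesis using GF k F_inner[OF rls s1] card_mults[of 1] exr[OF False rm] by simp
          qed
        qed
      qed
    qed
  qed
qed

lemma prod_kap: "(\<Prod>r<n. \<Prod>s<n. kap cX cY r s) = cX * p^(n-3) * cY^(n-2-m)"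
proof -
  have m0: "m \<noteq> 0" using m1 by auto
  have rows: "(\<Prod>s<n. kap cX cY r s) = 1" if "r \<noteq> 0" "r \<noteq> m" for r
    using that unfolding kap_def by simp
  have "(\<Prod>r<n. \<Prod>s<n. kap cX cY r s) = (\<Prod>r\<in>{0, m}. \<Prod>s<n. kap cX cY r s)"
    by (rule prod.mono_neutral_right) (use mn rows in auto)
  also have "\<dots> = (\<Prod>s<n. kap cX cY 0 s) * (\<Prod>s<n. kap cX cY m s)" using m0 by simp
  also have "(\<Prod>s<n. kap cX cY m s) = cY^(n-2-m)"
  proof -
    have "(\<Prod>s<n. kap cX cY m s) = (\<Prod>s<n. if s \<in> J then cY else 1)"
      by (rule prod.cong) (use m0 in \<open>auto simp: kap_def\<close>)
    also have "\<dots> = cY ^ card ({..<n} \<inter> J)" by (simp add: prod.If_cases Int_def)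
    also have "{..<n} \<inter> J = J" unfolding J_def by auto
    finally show ?thesis using card_J by simp
  qed
  also have "(\<Prod>s<n. kap cX cY 0 s) = cX * p^(n-3)"
  proof -
    have mi: "m \<in> {..<n}" using mn by auto
    have "(\<Prod>s<n. kap cX cY 0 s) = kap cX cY 0 m * (\<Prod>s\<in>{..<n} - {m}. kap cX cY 0 s)"
      by (rule prod.remove[OF _ mi]) simp
    also have "(\<Prod>s\<in>{..<n} - {m}. kap cX cY 0 s) = (\<Prod>s\<in>{..<n} - {m}. if s \<in> {1..<n-1} - {m} then p else 1)"
      by (rule prod.cong) (use m0 in \<open>auto simp: kap_def\<close>)
    also have "\<dots> = (\<Prod>s\<in>({..<n} - {m}) \<inter> {x. x \<in> {1..<n-1} - {m}}. p) * (\<Prod>s\<in>({..<n} - {m}) \<inter> - {x. x \<in> {1..<n-1} - {m}}. 1)"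
      by (rule prod.If_cases) simp
    also have "({..<n} - {m}) \<inter> {x. x \<in> {1..<n-1} - {m}} = {1..<n-1} - {m}" by auto
    also have "(\<Prod>s\<in>{1..<n-1} - {m}. p) = p ^ (n - 3)" using m1 mn n3 by (simp add: numeral_3_eq_3)
    finally show ?thesis unfolding kap_def by simp
  qed
  finally show ?thesis by (simp add: mult.commute mult.left_commute)
qed

lemma card_G:
  assumes cX: "card X = cX" "finite X" and cY: "\<And>s. s \<in> J \<Longrightarrow> card (Y s) = cY \<and> finite (Y s)"
  shows "card (Mat n (G X Y)) = cX * p^(n-3) * cY^(n-2-m) \<and> finite (Mat n (G X Y))"
proof -
  have out: "G X Y r s = {0}" if "n \<le> r \<or> n \<le> s" for r s
  proof -
    have a: "\<not> (r = 0 \<and> s = m)" using that mn by auto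
    have b: "\<not> (r = m \<and> s \<in> J)" using that mn unfolding J_iff by auto
    show ?thesis unfolding G_def if_not_P[OF a] if_not_P[OF b] using F_out[OF that] .
  qed
  have fin: "finite (G X Y r s)" for r s
    using cX cY[of s] finite_F unfolding G_def by auto
  note CM = card_Mat[of n "G X Y", OF out fin]
  have "(\<Prod>r<n. \<Prod>s<n. card (G X Y r s)) = (\<Prod>r<n. \<Prod>s<n. kap cX cY r s)"
    by (intro prod.cong refl) (use cardG_entry[OF cX(1)] cY in auto)
  then show ?thesis using CM prod_kap by simp
qed

lemma card_G0: "card (Mat n (G {0} (Y0 j0))) = p^(n-3) * p^(n-2-m) \<and> finite (Mat n (G {0} (Y0 j0)))"
  using card_G[of "{0}" 1 "Y0 j0" p, OF _ _ card_Y0] by simp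
lemma card_G1: "card (Mat n (G X1 (Y1 j0))) = (p - 1) * p^(n-3) \<and> finite (Mat n (G X1 (Y1 j0)))"
  using card_G[OF conjunct1[OF card_X1] conjunct2[OF card_X1] card_Y1] by simp

end

context cset begin

lemma card_I: "card I = n - 1 - m \<and> finite I"
proof -
  have "finite J" unfolding J_def by simp
  then show ?thesis unfolding I_def using zero_notin_J card_J mn by simp
qed

lemma disj0: assumes "j0 \<in> I" "j1 \<in> I" "j0 \<noteq> j1"
  shows "Mat n (G {0} (Y0 j0)) \<inter> Mat n (G {0} (Y0 j1)) = {}"
proof (rule ccontr)
  assume "Mat n (G {0} (Y0 j0)) \<inter> Mat n (G {0} (Y0 j1)) \<noteq> {}"
  then obtain A where A: "A \<in> Mat n (G {0} (Y0 j0))" "A \<in> Mat n (G {0} (Y0 j1))" by blast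
  define s where "s = (if j0 \<in> J then j0 else j1)"
  have sJ: "s \<in> J" using assms unfolding s_def I_def by auto
  have h0: "A m s \<in> Y0 j0 s" and h1: "A m s \<in> Y0 j1 s" using A sJ unfolding Mat_G0 by auto
  from h0 obtain d where d1: "A m s = P * d" and d2: "d \<in> {d. 0 \<le> d \<and> d < P^(\<beta>-1) \<and> d mod P^(\<beta>-2) = (if s = j0 then 1 else 0)}"
    unfolding Y0_def by (rule imageE)
  from h1 obtain d' where d'1: "A m s = P * d'" and d'2: "d' \<in> {d. 0 \<le> d \<and> d < P^(\<beta>-1) \<and> d mod P^(\<beta>-2) = (if s = j1 then 1 else 0)}"
    unfolding Y0_def by (rule imageE)
  have d: "A m s = P * d" "d mod P^(\<beta>-2) = (if s = j0 then 1 else 0)" using d1 d2 by auto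
  have d': "A m s = P * d'" "d' mod P^(\<beta>-2) = (if s = j1 then 1 else 0)" using d'1 d'2 by auto
  have "d = d'" using d(1) d'(1) P2 by simp
  then have "(if s = j0 then 1 else 0) = (if s = j1 then (1::int) else 0)" using d(2) d'(2) by simp
  moreover have "(s = j0) \<noteq> (s = j1)" using assms(3) sJ zero_notin_J unfolding s_def by auto
  ultimately show False by (auto split: if_splits)
qed

lemma disj1: assumes "j0 \<in> I" "j1 \<in> I" "j0 \<noteq> j1"
  shows "Mat n (G X1 (Y1 j0)) \<inter> Mat n (G X1 (Y1 j1)) = {}"
proof (rule ccontr)
  assume "Mat n (G X1 (Y1 j0)) \<inter> Mat n (G X1 (Y1 j1)) \<noteq> {}"
  then obtain A where A: "A \<in> Mat n (G X1 (Y1 j0))" "A \<in> Mat n (G X1 (Y1 j1))" by blast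
  define s where "s = (if j0 \<in> J then j0 else j1)"
  have sJ: "s \<in> J" using assms unfolding s_def I_def by auto
  have "A m s \<in> Y1 j0 s" "A m s \<in> Y1 j1 s" using A sJ unfolding Mat_G1 by auto
  then have "(if s = j0 then P else 0) = (if s = j1 then P else 0)" unfolding Y1_def by simp
  moreover have "(s = j0) \<noteq> (s = j1)" using assms(3) sJ zero_notin_J unfolding s_def by auto
  ultimately show False using P2 by (auto split: if_splits)
qed

lemma count: "card {A \<in> Mat n F. CondG P n m \<beta> A} = (n - 1 - m) * (p^(n-3) * p^(n-2-m) + (p - 1) * p^(n-3))"
proof -
  define U0 where "U0 = (\<Union>j0\<in>I. Mat n (G {0} (Y0 j0)))"
  define U1 where "U1 = (\<Union>j0\<in>I. Mat n (G X1 (Y1 j0)))"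
  have fI: "finite I" using card_I by simp
  have c0: "card U0 = (\<Sum>j0\<in>I. card (Mat n (G {0} (Y0 j0))))"
    unfolding U0_def using fI card_G0 disj0 by (intro card_UN_disjoint) auto
  have c1: "card U1 = (\<Sum>j0\<in>I. card (Mat n (G X1 (Y1 j0))))"
    unfolding U1_def using fI card_G1 disj1 by (intro card_UN_disjoint) auto
  have f0: "finite U0" unfolding U0_def using fI card_G0 by auto
  have f1: "finite U1" unfolding U1_def using fI card_G1 by auto
  have d01: "U0 \<inter> U1 = {}"
  proof (rule ccontr)
    assume "U0 \<inter> U1 \<noteq> {}"
    then obtain A j0 j1 where "A \<in> Mat n (G {0} (Y0 j0))" "A \<in> Mat n (G X1 (Y1 j1))" unfolding U0_def U1_def by blast
    then have "A 0 m = 0" "A 0 m \<in> X1" unfolding Mat_G0 Mat_G1 by auto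
    then show False unfolding X1_def using P2 by auto
  qed
  have "card {A \<in> Mat n F. CondG P n m \<beta> A} = card (U0 \<union> U1)" unfolding decomp U0_def U1_def ..
  also have "\<dots> = card U0 + card U1" using f0 f1 d01 by (rule card_Un_disjoint)
  also have "\<dots> = card I * (p^(n-3) * p^(n-2-m)) + card I * ((p - 1) * p^(n-3))"
    unfolding c0 c1 using card_G0 card_G1 by simp
  finally show ?thesis using card_I by (simp add: distrib_left)
qed

end

lemma sum_weighted:
  fixes x :: real
  shows "(\<Sum>r<N. real (r+1) * x^r) * (x - 1)^2 = real N * x^(N+1) - real (N+1) * x^N + 1"
proof (induction N)
  case 0 then show ?case by simp
next
  case (Suc N)
  have "(\<Sum>r<Suc N. real (r+1) * x^r) * (x - 1)^2 = (\<Sum>r<N. real (r+1) * x^r) * (x - 1)^2 + real (N+1) * x^N * (x-1)^2"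
    by (simp add: distrib_right)
  also have "\<dots> = real N * x^(N+1) - real (N+1) * x^N + 1 + real (N+1) * x^N * (x-1)^2" using Suc by simp
  also have "\<dots> = real (Suc N) * x^(Suc N+1) - real (Suc N+1) * x^(Suc N) + 1"
    by (simp add: power2_eq_square algebra_simps)
  finally show ?case .
qed

lemma sum_lin: "(\<Sum>r<N. (r+1::nat)) = (N+1) choose 2"
proof (induction N)
  case 0 then show ?case by simp
next
  case (Suc N)
  have b: "(Suc (Suc N) choose (Suc (Suc 0))) = (Suc N choose (Suc 0)) + (Suc N choose (Suc (Suc 0)))" by (rule binomial_Suc_Suc)
  have "((Suc N + 1) choose 2) = ((N + 1) choose 2) + (N + 1)"
    using b by (simp add: numeral_2_eq_2)
  then show ?case using Suc by simp
qed

theorem corollary4p5: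
  fixes n \<beta> p :: nat
  assumes "n \<ge> 3" and "\<beta> > 2" and "prime p"
  shows "(\<Sum>\<alpha>\<in>S2beta n \<beta>. real (g \<alpha> p)) =
     (real p ^ (n - 3) * ((real n - 2) * real p ^ (n - 1) - (real n - 1) * real p ^ (n - 2) + 1))
        / (real p - 1) ^ 2
     + (real p - 1) * real p ^ (n - 3) * real ((n - 1) choose 2)"
proof -
  define al where "al k = map (\<lambda>i. if i = 0 then 2 else if i = k - 1 then \<beta> else (1::nat)) [0..<n-1]" for k :: nat
  have al_nth: "al k ! i = (if i = 0 then 2 else if i = k - 1 then \<beta> else 1)" if "i < n - 1" for k i
    using that unfolding al_def by simp
  have al_len: "length (al k) = n - 1" for k unfolding al_def by simp
  have S: "S2beta n \<beta> = al ` {2..n-1}"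
  proof
    show "S2beta n \<beta> \<subseteq> al ` {2..n-1}"
    proof
      fix \<alpha> assume "\<alpha> \<in> S2beta n \<beta>"
      then obtain k where k: "k \<in> {2..n-1}" and l: "length \<alpha> = n - 1"
        and h: "\<forall>i<n - 1. \<alpha> ! i = (if i = 0 then 2 else if i = k - 1 then \<beta> else 1)"
        unfolding S2beta_def by blast
      have "\<alpha> = al k" by (rule nth_equalityI) (use l al_len h al_nth in auto)
      then show "\<alpha> \<in> al ` {2..n-1}" using k by blast
    qed
  next
    show "al ` {2..n-1} \<subseteq> S2beta n \<beta>"
      unfolding S2beta_def using al_len al_nth by blast
  qed
  have inj: "inj_on al {2..n-1}"
  proof
    fix k1 k2 assume k: "k1 \<in> {2..n-1}" "k2 \<in> {2..n-1}" and e: "al k1 = al k2"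
    have i: "k1 - 1 < n - 1" "k1 - 1 \<noteq> 0" using k by auto
    have "al k1 ! (k1 - 1) = \<beta>" using al_nth[OF i(1)] i(2) by simp
    moreover have "al k2 ! (k1 - 1) = (if k1 - 1 = k2 - 1 then \<beta> else 1)" using al_nth[OF i(1)] i(2) by simp
    ultimately have "k1 - 1 = k2 - 1" using e assms(2) by (auto split: if_splits)
    then show "k1 = k2" using k by auto
  qed
  have gk: "g (al k) p = (n - k) * (p^(n-3) * p^(n-1-k) + (p - 1) * p^(n-3))" if k: "k \<in> {2..n-1}" for k
  proof -
    interpret cset p n "k - 1" \<beta> using assms k by unfold_locales auto
    have en: "al k ! r = ex r" if "r < n - 1" for r using al_nth[OF that] unfolding ex_def by simp
    have "g (al k) p = card {A \<in> Mat n F. CondG (int p) n (k - 1) \<beta> A}"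
      unfolding g_def using subring_eq2[OF al_len en] by simp
    also have "\<dots> = (n - 1 - (k - 1)) * (p^(n-3) * p^(n-2-(k-1)) + (p - 1) * p^(n-3))" by (rule count)
    finally have h: "g (al k) p = (n - 1 - (k - 1)) * (p^(n-3) * p^(n-2-(k-1)) + (p - 1) * p^(n-3))" .
    have "n - 1 - (k - 1) = n - k" "n - 2 - (k - 1) = n - 1 - k" using k by auto
    then show ?thesis using h by simp
  qed
  define N where "N = n - 2"
  have N1: "N \<ge> 1" and nN: "n = N + 2" using assms(1) unfolding N_def by auto
  define x where "x = real p"
  have p1: "p \<ge> 1" using assms(3) prime_ge_1_nat by blast
  have x1: "x \<noteq> 1" using assms(3) unfolding x_def using prime_ge_2_nat[OF assms(3)] by auto
  have "(\<Sum>\<alpha>\<in>S2beta n \<beta>. real (g \<alpha> p)) = (\<Sum>k\<in>{2..n-1}. real (g (al k) p))"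
    unfolding S by (rule sum.reindex[OF inj, unfolded comp_def])
  also have "\<dots> = (\<Sum>k\<in>{2..n-1}. real ((n - k) * (p^(n-3) * p^(n-1-k) + (p - 1) * p^(n-3))))"
    by (rule sum.cong) (use gk in auto)
  also have "\<dots> = (\<Sum>r<N. real ((n - (n-1-r)) * (p^(n-3) * p^(n-1-(n-1-r)) + (p - 1) * p^(n-3))))"
    by (rule sum.reindex_bij_witness[of _ "\<lambda>k. n - 1 - k" "\<lambda>k. n - 1 - k"]) (auto simp: N_def)
  also have "\<dots> = (\<Sum>r<N. real (r+1) * x^r * x^(N-1) + (x - 1) * x^(N-1) * real (r+1))"
  proof (rule sum.cong)
    fix r assume "r \<in> {..<N}"
    then have r: "r < N" by simp
    have a: "n - (n-1-r) = r + 1" "n - 1 - (n-1-r) = r" "n - 3 = N - 1" using r nN by auto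
    have "real ((r + 1) * (p^(N-1) * p^r + (p - 1) * p^(N-1))) = real (r+1) * (x^(N-1) * x^r + (x - 1) * x^(N-1))"
      unfolding x_def using p1 by (simp add: of_nat_diff, simp add: algebra_simps)
    also have "\<dots> = real (r+1) * x^r * x^(N-1) + (x - 1) * x^(N-1) * real (r+1)"
      by (simp add: algebra_simps)
    finally show "real ((n - (n-1-r)) * (p^(n-3) * p^(n-1-(n-1-r)) + (p - 1) * p^(n-3))) =
        real (r+1) * x^r * x^(N-1) + (x - 1) * x^(N-1) * real (r+1)"
      unfolding a .
  qed simp
  also have "\<dots> = (\<Sum>r<N. real (r+1) * x^r) * x^(N-1) + (x - 1) * x^(N-1) * (\<Sum>r<N. real (r+1))"
    by (simp only: sum.distrib sum_distrib_left[symmetric] sum_distrib_right[symmetric])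
  also have "(\<Sum>r<N. real (r+1) * x^r) = (real N * x^(N+1) - real (N+1) * x^N + 1) / (x - 1)^2"
    using sum_weighted[of x N] x1 by (simp add: field_simps)
  also have "(\<Sum>r<N. real (r+1)) = real ((N+1) choose 2)" unfolding sum_lin[symmetric] of_nat_sum ..
  finally have fin: "(\<Sum>\<alpha>\<in>S2beta n \<beta>. real (g \<alpha> p)) =
    ((real N * x^(N+1) - real (N+1) * x^N + 1) / (x - 1)^2) * x^(N-1) + (x - 1) * x^(N-1) * real ((N+1) choose 2)" .
  have e: "n - 3 = N - 1" "n - 1 = N + 1" "n - 2 = N" "real n - 2 = real N" "real n - 1 = real (N+1)"
    using nN by auto
  have dd: "((real N * x^(N+1) - real (N+1) * x^N + 1) / (x - 1)^2) * x^(N-1) =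
     x^(N-1) * (real N * x^(N+1) - real (N+1) * x^N + 1) / (x - 1)^2" by simp
  show ?thesis unfolding e fin x_def[symmetric] dd ..
qed

end
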